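(* Let $\Omega\subset\mathbb{R}^d$ be an unbounded closed convex set and let $W,V\in C^1(\mathbb{R}^d)$ with $W$ $\lambda_W$-geodesically convex on $\Omega-\Omega$, $V$ $\lambda_V$-geodesically convex on $\Omega$, and $|\nabla W(x)|\le C_0(1+|x|)$, $|\nabla V(x)|\le C_0(1+|x|)$ for all $x$. Then there is a constant $C=C(W,V)>0$ (independent of $n$ and of the number of particles) such that the following holds: if $n\in\mathbb{N}$, $x^n_1,\dots,x^n_{k}\in\Omega\cap B(n)$, $m^n_i\ge0$ with $\sum_im^n_i=1$, $(x^n_i(t))_i$ is a locally absolutely continuous solution of $\dot x^n_i(t)=P_{x^n_i(t)}\big(-\sum_jm^n_j\nabla W(x^n_i(t)-x^n_j(t))-\nabla V(x^n_i(t))\big)$, $x^n_i(0)=x^n_i$, and $\mu^n(t)=\sum_im^n_i\delta_{x^n_i(t)}$, then $\mathrm{supp}(\mu^n(t))\subset\Omega\cap B(r(t))$ for all $t\ge0$ with $r(t)\le(n+1)\exp(Ct)$.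
   Context: $B(r)$ is the ball of radius $r$ centered at the origin. $T(\Omega,x)$ is the tangent cone of the convex set $\Omega$ at $x$ (closure of $\{s(y-x):s\ge0,y\in\Omega\}$) and $P_x(w)$ its nearest point to $w$. $\lambda$-geodesic convexity on convex $K$: $f(y)\ge f(x)+\langle\nabla f(x),y-x\rangle+\frac\lambda2|y-x|^2$ on $K$. *)

theory Defs
  imports "HOL-Analysis.Analysis"
begin

definition tangent_cone :: "'a::euclidean_space set \<Rightarrow> 'a \<Rightarrow> 'a set" where
  "tangent_cone \<Omega> x = closure {s *\<^sub>R (y - x) | s y. s \<ge> 0 \<and> y \<in> \<Omega>}"

definition tangent_proj :: "'a::euclidean_space set \<Rightarrow> 'a \<Rightarrow> 'a \<Rightarrow> 'a" where
  "tangent_proj \<Omega> x w = closest_point (tangent_cone \<Omega> x) w"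

definition geod_convex_on :: "real \<Rightarrow> 'a::real_inner set \<Rightarrow> ('a \<Rightarrow> real) \<Rightarrow> ('a \<Rightarrow> 'a) \<Rightarrow> bool" where
  "geod_convex_on lam K f g \<longleftrightarrow>
     (\<forall>x\<in>K. \<forall>y\<in>K. f y \<ge> f x + g x \<bullet> (y - x) + lam / 2 * (norm (y - x))\<^sup>2)"

definition set_diff_minus :: "'a::ab_group_add set \<Rightarrow> 'a set \<Rightarrow> 'a set" where
  "set_diff_minus A B = {a - b | a b. a \<in> A \<and> b \<in> B}"

definition abs_continuous_on :: "real set \<Rightarrow> (real \<Rightarrow> 'a::real_normed_vector) \<Rightarrow> bool" where
  "abs_continuous_on I f \<longleftrightarrow>
    (\<forall>\<epsilon>>0. \<exists>\<delta>>0. \<forall>D. finite D \<and> (\<forall>(a,b)\<in>D. a \<le> b \<and> {a..b} \<subseteq> I)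
        \<and> pairwise (\<lambda>(a,b) (c,d). {a<..<b} \<inter> {c<..<d} = {}) D
        \<and> (\<Sum>(a,b)\<in>D. b - a) < \<delta>
        \<longrightarrow> (\<Sum>(a,b)\<in>D. norm (f b - f a)) < \<epsilon>)"

definition loc_abs_continuous_nonneg :: "(real \<Rightarrow> 'a::real_normed_vector) \<Rightarrow> bool" where
  "loc_abs_continuous_nonneg f \<longleftrightarrow> (\<forall>T\<ge>0. abs_continuous_on {0..T} f)"

end

theory Submission
  imports Defs
begin

lemma tag_interval:
  fixes p :: "(real \<times> real set) set"
  assumes "p tagged_division_of {a..b}" "(x,K) \<in> p"
  shows "\<exists>u v. u \<le> v \<and> K = {u..v} \<and> x \<in> K \<and> K \<subseteq> {a..b}"
proof -
  obtain u v where K: "K = cbox u v" using tagged_division_ofD(4)[OF assms] by blast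
  have "x \<in> K" using tagged_division_ofD(2)[OF assms] .
  moreover have "K \<subseteq> {a..b}" using tagged_division_ofD(3)[OF assms] .
  ultimately show ?thesis using K by (auto simp: cbox_interval)
qed

lemma ac_bound:
  fixes f :: "real \<Rightarrow> 'a::real_normed_vector" and g :: "real \<Rightarrow> real"
  assumes ab: "a \<le> b" and ac: "abs_continuous_on {a..b} f"
    and N: "negligible N" and gc: "continuous_on {a..b} g" and g0: "\<And>t. t\<in>{a..b} \<Longrightarrow> g t \<ge> 0"
    and der: "\<And>t. t \<in> {a<..<b} \<Longrightarrow> t \<notin> N \<Longrightarrow>
        \<exists>f'. (f has_vector_derivative f') (at t within {a..b}) \<and> norm f' \<le> g t"
  shows "norm (f b - f a) \<le> integral {a..b} g"
proof -
  have main: "norm (f b - f a) \<le> integral {a..b} g + e * (b - a + 2)" if e: "e > 0" for e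
  proof -
    define E where "E = N \<union> {a,b}"
    have negE: "negligible E" unfolding E_def using N by (simp add: negligible_Un)
    obtain \<delta> where \<delta>: "\<delta> > 0" and \<delta>AC: "\<And>D. finite D \<and> (\<forall>(u,v)\<in>D. u \<le> v \<and> {u..v} \<subseteq> {a..b})
        \<and> pairwise (\<lambda>(a,b) (c,d). {a<..<b} \<inter> {c<..<d} = {}) D
        \<and> (\<Sum>(u,v)\<in>D. v - u) < \<delta> \<Longrightarrow> (\<Sum>(u,v)\<in>D. norm (f v - f u)) < e"
      using ac e unfolding abs_continuous_on_def by meson
    have "(indicator E has_integral (0::real)) (cbox a b)" using negE negligible_def by blast
    then obtain \<gamma>3 where g3: "gauge \<gamma>3" and \<gamma>3: "\<And>D. D tagged_division_of cbox a b \<and> \<gamma>3 fine D \<Longrightarrow>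
        norm ((\<Sum>(x,k)\<in>D. Henstock_Kurzweil_Integration.content k *\<^sub>R (indicator E x :: real)) - 0) < \<delta>"
      using \<delta> unfolding has_integral by meson
    have "(g has_integral integral {a..b} g) (cbox a b)"
      using integrable_continuous_real[OF gc] by (simp add: cbox_interval has_integral_integral)
    then obtain \<gamma>1 where g1: "gauge \<gamma>1" and \<gamma>1: "\<And>D. D tagged_division_of cbox a b \<and> \<gamma>1 fine D \<Longrightarrow>
        norm ((\<Sum>(x,k)\<in>D. Henstock_Kurzweil_Integration.content k *\<^sub>R g x) - integral {a..b} g) < e"
      using e unfolding has_integral by meson
    have loc: "\<exists>r>0. t \<in> {a<..<b} - E \<longrightarrow> (\<forall>s\<in>{a..b}. \<bar>s - t\<bar> < r \<longrightarrow> norm (f s - f t) \<le> (g t + e) * \<bar>s - t\<bar>)" for t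
    proof (cases "t \<in> {a<..<b} - E")
      case False then show ?thesis by (intro exI[of _ 1]) auto
    next
      case True
      then obtain f' where d: "(f has_vector_derivative f') (at t within {a..b})" and nf: "norm f' \<le> g t"
        using der unfolding E_def by blast
      then obtain r where r: "r > 0" and hr: "\<forall>y\<in>{a..b}. norm (y - t) < r \<longrightarrow>
          norm (f y - f t - (y - t) *\<^sub>R f') \<le> e * norm (y - t)"
        using e unfolding has_vector_derivative_def has_derivative_within_alt by blast
      have "norm (f s - f t) \<le> (g t + e) * \<bar>s - t\<bar>" if "s \<in> {a..b}" "\<bar>s - t\<bar> < r" for s
      proof -
        have "norm (f s - f t) \<le> norm (f s - f t - (s - t) *\<^sub>R f') + norm ((s - t) *\<^sub>R f')"
          by (metis add.commute diff_add_cancel norm_triangle_ineq)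
        also have "\<dots> \<le> e * \<bar>s - t\<bar> + \<bar>s - t\<bar> * g t"
          using hr that nf by (intro add_mono) (auto intro: mult_left_mono)
        finally show ?thesis by (simp add: algebra_simps)
      qed
      then show ?thesis using r by blast
    qed
    then obtain r where r: "\<And>t. r t > 0" and hr: "\<And>t s. t \<in> {a<..<b} - E \<Longrightarrow> s\<in>{a..b} \<Longrightarrow> \<bar>s - t\<bar> < r t \<Longrightarrow>
        norm (f s - f t) \<le> (g t + e) * \<bar>s - t\<bar>"
      by metis
    define \<gamma>2 where "\<gamma>2 t = ball t (r t)" for t
    have g2: "gauge \<gamma>2" unfolding \<gamma>2_def using r by (simp add: gauge_def)
    obtain p where p: "p tagged_division_of cbox a b" and fp: "(\<lambda>x. (\<lambda>x. \<gamma>1 x \<inter> \<gamma>2 x) x \<inter> \<gamma>3 x) fine p"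
      using fine_division_exists[OF gauge_Int[OF gauge_Int[OF g1 g2] g3]] by blast
    have f1: "\<gamma>1 fine p" and f2: "\<gamma>2 fine p" and f3: "\<gamma>3 fine p" using fp by (auto simp: fine_Int)
    have pab: "p tagged_division_of {a..b}" using p by (simp add: cbox_interval)
    have finp: "finite p" using p by blast
    define F where "F = (\<lambda>(x::real,K::real set). norm (f (Sup K) - f (Inf K)))"
    have eq1: "f b - f a = (\<Sum>(x, K)\<in>p. f (Sup K) - f (Inf K))"
      using additive_tagged_division_1[OF ab pab, of f] by simp
    have "norm (f b - f a) \<le> (\<Sum>y\<in>p. F y)"
      unfolding eq1 F_def by (rule order_trans[OF norm_sum]) (simp add: case_prod_unfold)
    also have "\<dots> = (\<Sum>y\<in>p. if fst y \<notin> E then F y else 0) + (\<Sum>y\<in>p. if fst y \<in> E then F y else 0)"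
      by (subst sum.distrib[symmetric]) (auto intro: sum.cong)
    also have "(\<Sum>y\<in>p. if fst y \<notin> E then F y else 0) \<le> (\<Sum>(x,K)\<in>p. Henstock_Kurzweil_Integration.content K * g x + e * Henstock_Kurzweil_Integration.content K)"
    proof (rule sum_mono)
      fix y assume y: "y \<in> p"
      obtain x K where yxK: "y = (x,K)" by fastforce
      obtain u v where uv: "u \<le> v" "K = {u..v}" "x \<in> K" "K \<subseteq> {a..b}"
        using tag_interval[OF pab y[unfolded yxK]] by blast
      have gx: "g x \<ge> 0" using g0 uv by auto
      show "(if fst y \<notin> E then F y else 0) \<le> (case y of (x, K) \<Rightarrow> Henstock_Kurzweil_Integration.content K * g x + e * Henstock_Kurzweil_Integration.content K)"
      proof (cases "x \<in> E")
        case True then show ?thesis using yxK uv gx e by auto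
      next
        case False
        have xin: "x \<in> {a<..<b} - E" using False uv unfolding E_def by auto
        have "K \<subseteq> ball x (r x)" using f2 y yxK unfolding \<gamma>2_def fine_def by blast
        hence "u \<in> ball x (r x)" "v \<in> ball x (r x)" using uv by (auto simp del: mem_ball)
        hence du: "\<bar>u - x\<bar> < r x" and dv: "\<bar>v - x\<bar> < r x" by (auto simp: dist_real_def abs_minus_commute)
        have "norm (f v - f u) \<le> norm (f v - f x) + norm (f x - f u)"
          by (metis diff_add_cancel norm_triangle_ineq add.commute diff_add_eq)
        also have "\<dots> \<le> (g x + e) * \<bar>v - x\<bar> + (g x + e) * \<bar>u - x\<bar>"
          using hr[OF xin _ dv] hr[OF xin _ du] uv by (auto simp: norm_minus_commute)
        also have "\<dots> = (g x + e) * (v - u)" using uv by (auto simp: algebra_simps)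
        finally show ?thesis using yxK uv False F_def by (simp add: algebra_simps)
      qed
    qed
    also have "(\<Sum>(x,K)\<in>p. Henstock_Kurzweil_Integration.content K * g x + e * Henstock_Kurzweil_Integration.content K) = (\<Sum>(x,K)\<in>p. Henstock_Kurzweil_Integration.content K *\<^sub>R g x) + e * (b - a)"
    proof -
      have "(\<Sum>(x,K)\<in>p. Henstock_Kurzweil_Integration.content K) = (\<Sum>(x, K)\<in>p. Sup K - Inf K)"
      proof (rule sum.cong[OF refl])
        fix y assume y: "y \<in> p"
        obtain x K where yxK: "y = (x,K)" by fastforce
        obtain u v where uv: "u \<le> v" "K = {u..v}" using tag_interval[OF pab y[unfolded yxK]] by blast
        show "(case y of (x, K) \<Rightarrow> Henstock_Kurzweil_Integration.content K) = (case y of (x, K) \<Rightarrow> Sup K - Inf K)" using yxK uv by simp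
      qed
      also have "\<dots> = b - a" using additive_tagged_division_1[OF ab pab, of id] by simp
      finally have "(\<Sum>(x,K)\<in>p. Henstock_Kurzweil_Integration.content K) = b - a" .
      then show ?thesis by (simp add: sum.distrib case_prod_unfold sum_distrib_left[symmetric])
    qed
    also have "(\<Sum>(x,K)\<in>p. Henstock_Kurzweil_Integration.content K *\<^sub>R g x) \<le> integral {a..b} g + e"
      using \<gamma>1[of p] p f1 by auto
    finally have good: "norm (f b - f a) \<le> integral {a..b} g + e + e * (b - a) + (\<Sum>y\<in>p. if fst y \<in> E then F y else 0)"
      by linarith
    define P where "P = (\<lambda>(x,K). x \<in> E \<and> Inf K < (Sup K::real))"
    define Q where "Q = {y\<in>p. P y}"
    have finQ: "finite Q" using finp Q_def by simp
    have "(\<Sum>y\<in>p. if fst y \<in> E then F y else 0) = (\<Sum>y\<in>p. if P y then F y else 0)"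
    proof (rule sum.cong[OF refl])
      fix y assume y: "y \<in> p"
      obtain x K where yxK: "y = (x,K)" by fastforce
      obtain u v where uv: "u \<le> v" "K = {u..v}" using tag_interval[OF pab y[unfolded yxK]] by blast
      show "(if fst y \<in> E then F y else 0) = (if P y then F y else 0)"
        using uv yxK by (auto simp: P_def F_def)
    qed
    also have "\<dots> = (\<Sum>y\<in>Q. F y)" unfolding Q_def by (simp add: sum.inter_filter[OF finp])
    finally have badeq: "(\<Sum>y\<in>p. if fst y \<in> E then F y else 0) = (\<Sum>y\<in>Q. F y)" .
    define h where "h = (\<lambda>(x::real, K::real set). (Inf K, Sup K))"
    have Qi: "\<exists>u v. u < v \<and> K = {u..v} \<and> K \<subseteq> {a..b} \<and> x \<in> E" if "(x,K) \<in> Q" for x K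
    proof -
      have "(x,K) \<in> p" "P (x,K)" using that Q_def by auto
      then obtain u v where uv: "u \<le> v" "K = {u..v}" "K \<subseteq> {a..b}" using tag_interval[OF pab] by blast
      then show ?thesis using \<open>P (x,K)\<close> by (auto simp: P_def)
    qed
    have injh: "inj_on h Q"
    proof (rule inj_onI)
      fix y1 y2 assume y1: "y1 \<in> Q" and y2: "y2 \<in> Q" and he: "h y1 = h y2"
      obtain x1 K1 where e1: "y1 = (x1,K1)" by fastforce
      obtain x2 K2 where e2: "y2 = (x2,K2)" by fastforce
      obtain u1 v1 where uv1: "u1 < v1" "K1 = {u1..v1}" using Qi y1 e1 by blast
      obtain u2 v2 where uv2: "u2 < v2" "K2 = {u2..v2}" using Qi y2 e2 by blast
      have "u1 = u2" "v1 = v2" using he e1 e2 uv1 uv2 by (auto simp: h_def)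
      show "y1 = y2"
      proof (rule ccontr)
        assume "y1 \<noteq> y2"
        hence "interior K1 \<inter> interior K2 = {}"
          using tagged_division_ofD(5)[OF pab] y1 y2 e1 e2 Q_def by blast
        then show False using uv1 uv2 \<open>u1 = u2\<close> \<open>v1 = v2\<close> by auto
      qed
    qed
    have "(\<Sum>(u,v)\<in>h ` Q. norm (f v - f u)) < e"
    proof (rule \<delta>AC, intro conjI)
      show "finite (h ` Q)" using finQ by simp
      show "\<forall>(u, v)\<in>h ` Q. u \<le> v \<and> {u..v} \<subseteq> {a..b}"
      proof
        fix z assume "z \<in> h ` Q"
        then obtain x K where "(x,K) \<in> Q" "z = h (x,K)" by auto
        then show "case z of (u, v) \<Rightarrow> u \<le> v \<and> {u..v} \<subseteq> {a..b}" using Qi[of x K] by (auto simp: h_def)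
      qed
      show "pairwise (\<lambda>(a, b) (c, d). {a<..<b} \<inter> {c<..<d} = {}) (h ` Q)"
      proof (unfold pairwise_def, intro ballI impI)
        fix z1 z2 assume z1: "z1 \<in> h ` Q" and z2: "z2 \<in> h ` Q" and nez: "z1 \<noteq> z2"
        obtain a1 b1 where ez1: "z1 = (a1,b1)" by fastforce
        obtain a2 b2 where ez2: "z2 = (a2,b2)" by fastforce
        have ne: "a1 \<noteq> a2 \<or> b1 \<noteq> b2" using nez ez1 ez2 by auto
        obtain x1 K1 where q1: "(x1,K1) \<in> Q" "(a1,b1) = h (x1,K1)" using z1 ez1 by auto
        obtain x2 K2 where q2: "(x2,K2) \<in> Q" "(a2,b2) = h (x2,K2)" using z2 ez2 by auto
        obtain u1 v1 where uv1: "u1 < v1" "K1 = {u1..v1}" using Qi q1 by blast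
        obtain u2 v2 where uv2: "u2 < v2" "K2 = {u2..v2}" using Qi q2 by blast
        have ab1: "a1 = u1" "b1 = v1" using q1 uv1 by (auto simp: h_def)
        have ab2: "a2 = u2" "b2 = v2" using q2 uv2 by (auto simp: h_def)
        have "(x1,K1) \<noteq> (x2,K2)" using ne ab1 ab2 uv1 uv2 by auto
        hence "interior K1 \<inter> interior K2 = {}"
          using tagged_division_ofD(5)[OF pab] q1 q2 Q_def by blast
        then show "(\<lambda>(a, b) (c, d). {a<..<b} \<inter> {c<..<d} = {}) z1 z2" using ab1 ab2 uv1 uv2 ez1 ez2 by simp
      qed
      have "(\<Sum>(u,v)\<in>h ` Q. v - u) = (\<Sum>y\<in>Q. (\<lambda>(u,v). v - u) (h y))"
        using sum.reindex[OF injh] by (simp add: comp_def)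
      also have "\<dots> = (\<Sum>y\<in>Q. Henstock_Kurzweil_Integration.content (snd y))"
      proof (rule sum.cong[OF refl])
        fix y assume "y \<in> Q"
        then obtain x K where "(x,K) \<in> Q" "y = (x,K)" by (metis prod.collapse)
        then show "(\<lambda>(u,v). v - u) (h y) = Henstock_Kurzweil_Integration.content (snd y)" using Qi[of x K] by (auto simp: h_def)
      qed
      also have "\<dots> = (\<Sum>y\<in>p. if P y then Henstock_Kurzweil_Integration.content (snd y) else 0)"
        unfolding Q_def by (simp add: sum.inter_filter[OF finp])
      also have "\<dots> \<le> (\<Sum>(x,k)\<in>p. Henstock_Kurzweil_Integration.content k *\<^sub>R (indicator E x :: real))"
        by (rule sum_mono) (auto simp: P_def indicator_def)
      also have "\<dots> < \<delta>" using \<gamma>3[of p] p f3 by auto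
      finally show "(\<Sum>(u,v)\<in>h ` Q. v - u) < \<delta>" .
    qed
    moreover have "(\<Sum>(u,v)\<in>h ` Q. norm (f v - f u)) = (\<Sum>y\<in>Q. F y)"
      using sum.reindex[OF injh, of "\<lambda>(u,v). norm (f v - f u)"] by (simp add: comp_def h_def F_def case_prod_unfold)
    ultimately show ?thesis using good badeq by (simp add: algebra_simps)
  qed
  show ?thesis
  proof (rule field_le_epsilon)
    fix e :: real assume e: "e > 0"
    have "norm (f b - f a) \<le> integral {a..b} g + (e / (b - a + 2)) * (b - a + 2)"
      using main[of "e / (b - a + 2)"] e ab by simp
    then show "norm (f b - f a) \<le> integral {a..b} g + e" using ab by simp
  qed
qed


lemma ac_cont:
  fixes f :: "real \<Rightarrow> 'a::real_normed_vector"
  assumes ac: "abs_continuous_on {a..b} f"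
  shows "continuous_on {a..b} f"
  unfolding continuous_on_iff
proof (intro ballI allI impI)
  fix t e :: real assume t: "t \<in> {a..b}" and e: "e > 0"
  from ac e obtain \<delta> where \<delta>: "\<delta> > 0" and \<delta>AC: "\<forall>D. finite D \<and> (\<forall>(u,v)\<in>D. u \<le> v \<and> {u..v} \<subseteq> {a..b})
        \<and> pairwise (\<lambda>(a,b) (c,d). {a<..<b} \<inter> {c<..<d} = {}) D
        \<and> (\<Sum>(u,v)\<in>D. v - u) < \<delta> \<longrightarrow> (\<Sum>(u,v)\<in>D. norm (f v - f u)) < e"
    unfolding abs_continuous_on_def by blast
  have "dist (f s) (f t) < e" if s: "s \<in> {a..b}" "dist s t < \<delta>" for s
  proof -
    have "(\<Sum>(u,v)\<in>{(min s t, max s t)}. norm (f v - f u)) < e"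
    proof (rule \<delta>AC[rule_format], intro conjI)
      show "finite {(min s t, max s t)}" by simp
      show "\<forall>(u, v)\<in>{(min s t, max s t)}. u \<le> v \<and> {u..v} \<subseteq> {a..b}" using s(1) t by auto
      show "pairwise (\<lambda>(a, b) (c, d). {a<..<b} \<inter> {c<..<d} = {}) {(min s t, max s t)}"
        by (rule pairwise_singleton)
      have "max s t - min s t = \<bar>s - t\<bar>" by (simp add: abs_if max_def min_def)
      then show "(\<Sum>(u, v)\<in>{(min s t, max s t)}. v - u) < \<delta>" using s(2) by (simp add: dist_real_def)
    qed
    then show ?thesis by (cases "s \<le> t") (auto simp: dist_norm norm_minus_commute)
  qed
  then show "\<exists>d>0. \<forall>s\<in>{a..b}. dist s t < d \<longrightarrow> dist (f s) (f t) < e" using \<delta> by blast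
qed

lemma proj_bound:
  fixes \<Omega> :: "'a::euclidean_space set"
  assumes "x \<in> \<Omega>"
  shows "norm (tangent_proj \<Omega> x w) \<le> 2 * norm w"
proof -
  have "0 \<in> {s *\<^sub>R (y - x) | s y. s \<ge> 0 \<and> y \<in> \<Omega>}" 
    unfolding mem_Collect_eq
    apply (rule exI[of _ "0::real"])
    apply (rule exI[of _ x])
    using assms by simp
  hence z: "0 \<in> tangent_cone \<Omega> x" unfolding tangent_cone_def by (rule subsetD[OF closure_subset])
  have cl: "closed (tangent_cone \<Omega> x)" unfolding tangent_cone_def by simp
  have "dist w (tangent_proj \<Omega> x w) \<le> dist w 0"
    unfolding tangent_proj_def by (rule closest_point_le[OF cl z])
  hence "norm (tangent_proj \<Omega> x w - w) \<le> norm w" by (simp add: dist_norm norm_minus_commute)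
  moreover have "norm (tangent_proj \<Omega> x w) \<le> norm (tangent_proj \<Omega> x w - w) + norm w"
    using norm_triangle_ineq[of "tangent_proj \<Omega> x w - w" w] by simp
  ultimately show ?thesis by simp
qed

theorem lemma4p3:
  fixes \<Omega> :: "'a::euclidean_space set"
    and W V :: "'a \<Rightarrow> real" and gW gV :: "'a \<Rightarrow> 'a"
    and lamW lamV C0 :: real
  assumes "closed \<Omega>" and "convex \<Omega>" and "\<not> bounded \<Omega>"
    and "\<And>x. (W has_derivative (\<lambda>h. gW x \<bullet> h)) (at x)" and "continuous_on UNIV gW"
    and "\<And>x. (V has_derivative (\<lambda>h. gV x \<bullet> h)) (at x)" and "continuous_on UNIV gV"
    and "geod_convex_on lamW (set_diff_minus \<Omega> \<Omega>) W gW"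
    and "geod_convex_on lamV \<Omega> V gV"
    and "\<And>x. norm (gW x) \<le> C0 * (1 + norm x)"
    and "\<And>x. norm (gV x) \<le> C0 * (1 + norm x)"
  shows "\<exists>C>0. \<forall>(n::nat) (k::nat) (x0 :: nat \<Rightarrow> 'a) (m :: nat \<Rightarrow> real) (x :: nat \<Rightarrow> real \<Rightarrow> 'a).
     (\<forall>i<k. x0 i \<in> \<Omega> \<inter> ball 0 (real n))
     \<and> (\<forall>i<k. m i \<ge> 0) \<and> (\<Sum>i<k. m i) = 1
     \<and> (\<forall>i<k. loc_abs_continuous_nonneg (x i))
     \<and> (\<forall>i<k. \<forall>t\<ge>0. x i t \<in> \<Omega>)
     \<and> (\<forall>i<k. x i 0 = x0 i)
     \<and> (\<forall>i<k. AE t in lebesgue. t > 0 \<longrightarrow>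
          (x i has_vector_derivative
             tangent_proj \<Omega> (x i t) (- (\<Sum>j<k. m j *\<^sub>R gW (x i t - x j t)) - gV (x i t)))
          (at t within {0..}))
     \<longrightarrow> (\<forall>t\<ge>0. \<exists>r. r \<le> (real n + 1) * exp (C * t) \<and>
             {x i t | i. i < k \<and> m i > 0} \<subseteq> \<Omega> \<inter> ball 0 r)"
proof -
  define K where "K = max C0 1"
  define C where "C = 6 * K"
  have K1: "K \<ge> 1" unfolding K_def by simp
  have gWb: "norm (gW y) \<le> K * (1 + norm y)" for y
    using assms(10)[of y] unfolding K_def
    by (smt (verit, best) max.cobounded1 mult_right_mono norm_ge_zero)
  have gVb: "norm (gV y) \<le> K * (1 + norm y)" for y
    using assms(11)[of y] unfolding K_def
    by (smt (verit, best) max.cobounded1 mult_right_mono norm_ge_zero)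
  have Cpos: "C > 0" unfolding C_def using K1 by simp
  show ?thesis
  proof (rule exI[of _ C], rule conjI[OF Cpos], intro allI, rule impI)
    fix n k :: nat and x0 :: "nat \<Rightarrow> 'a" and m :: "nat \<Rightarrow> real" and x :: "nat \<Rightarrow> real \<Rightarrow> 'a"
    assume H: "(\<forall>i<k. x0 i \<in> \<Omega> \<inter> ball 0 (real n))
     \<and> (\<forall>i<k. m i \<ge> 0) \<and> (\<Sum>i<k. m i) = 1
     \<and> (\<forall>i<k. loc_abs_continuous_nonneg (x i))
     \<and> (\<forall>i<k. \<forall>t\<ge>0. x i t \<in> \<Omega>)
     \<and> (\<forall>i<k. x i 0 = x0 i)
     \<and> (\<forall>i<k. AE t in lebesgue. t > 0 \<longrightarrow>
          (x i has_vector_derivative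
             tangent_proj \<Omega> (x i t) (- (\<Sum>j<k. m j *\<^sub>R gW (x i t - x j t)) - gV (x i t)))
          (at t within {0..}))"
    have x0b: "\<And>i. i < k \<Longrightarrow> norm (x0 i) < real n" using H by auto
    have m0: "\<And>i. i < k \<Longrightarrow> m i \<ge> 0" using H by auto
    have msum: "(\<Sum>i<k. m i) = 1" using H by auto
    have lac: "\<And>i. i < k \<Longrightarrow> loc_abs_continuous_nonneg (x i)" using H by auto
    have inO: "\<And>i t. i < k \<Longrightarrow> t \<ge> 0 \<Longrightarrow> x i t \<in> \<Omega>" using H by auto
    have init: "\<And>i. i < k \<Longrightarrow> x i 0 = x0 i" using H by auto
    have ae: "\<And>i. i < k \<Longrightarrow> AE t in lebesgue. t > 0 \<longrightarrow>
          (x i has_vector_derivative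
             tangent_proj \<Omega> (x i t) (- (\<Sum>j<k. m j *\<^sub>R gW (x i t - x j t)) - gV (x i t)))
          (at t within {0..})" using H by auto
    define h where "h t = (real n + 1) * exp (C * t) - 1" for t
    have hc: "continuous_on S h" for S unfolding h_def by (intro continuous_intros)
    have claim: "norm (x i t) < h t" if "t \<ge> 0" "i < k" for t i
    proof (rule ccontr)
      assume "\<not> norm (x i t) < h t"
      then have bad: "h t \<le> norm (x i t)" by simp
      define t1 where "t1 = t"
      define A where "A = {s\<in>{0..t1}. \<exists>j<k. h s \<le> norm (x j s)}"
      have Aeq: "A = (\<Union>j<k. {s\<in>{0..t1}. h s \<le> norm (x j s)})" unfolding A_def by auto
      have "closed {s\<in>{0..t1}. h s \<le> norm (x j s)}" if "j < k" for j
      proof (rule continuous_on_closed_Collect_le)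
        show "continuous_on {0..t1} h" by (rule hc)
        have "abs_continuous_on {0..t1} (x j)" using lac[OF that] \<open>t \<ge> 0\<close> t1_def
          unfolding loc_abs_continuous_nonneg_def by auto
        then have "continuous_on {0..t1} (x j)" by (rule ac_cont)
        then show "continuous_on {0..t1} (\<lambda>s. norm (x j s))" by (intro continuous_intros)
      qed simp
      then have clA: "closed A" unfolding Aeq by (intro closed_UN) auto
      have tA: "t \<in> A" unfolding A_def t1_def using that bad by auto
      have bddA: "bdd_below A" unfolding A_def by (rule bdd_belowI[of _ 0]) auto
      define \<tau> where "\<tau> = Inf A"
      have \<tau>A: "\<tau> \<in> A" unfolding \<tau>_def using clA bddA tA closed_contains_Inf by blast
      then obtain i where ik: "i < k" and hi: "h \<tau> \<le> norm (x i \<tau>)" and \<tau>0: "\<tau> \<ge> 0"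
        unfolding A_def by auto
      have below: "norm (x j s) < h s" if "0 \<le> s" "s < \<tau>" "j < k" for s j
      proof (rule ccontr)
        assume "\<not> norm (x j s) < h s"
        then have "s \<in> A" using that \<tau>A unfolding A_def by auto
        then have "\<tau> \<le> s" unfolding \<tau>_def using bddA by (rule cInf_lower)
        then show False using that by simp
      qed
      have \<tau>pos: "\<tau> > 0"
      proof (rule ccontr)
        assume "\<not> \<tau> > 0"
        then have "\<tau> = 0" using \<tau>0 by simp
        then have "norm (x i \<tau>) < h \<tau>" using x0b[OF ik] init[OF ik] by (simp add: h_def)
        then show False using hi by simp
      qed
      obtain N where Nsub: "{s \<in> space lebesgue. \<not> (s > 0 \<longrightarrow>
          (x i has_vector_derivative
             tangent_proj \<Omega> (x i s) (- (\<Sum>j<k. m j *\<^sub>R gW (x i s - x j s)) - gV (x i s)))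
          (at s within {0..}))} \<subseteq> N" and Nm: "emeasure lebesgue N = 0" and Ns: "N \<in> sets lebesgue"
        using ae[OF ik] by (rule AE_E)
      have negN: "negligible N" using Nm Ns by (simp add: negligible_iff_null_sets null_sets_def)
      define g where "g s = C * (real n + 1) * exp (C * s)" for s
      have "norm (x i \<tau> - x i 0) \<le> integral {0..\<tau>} g"
      proof (rule ac_bound[OF \<tau>0 _ negN])
        show "abs_continuous_on {0..\<tau>} (x i)" using lac[OF ik] \<tau>0
          unfolding loc_abs_continuous_nonneg_def by auto
        show "continuous_on {0..\<tau>} g" unfolding g_def by (intro continuous_intros)
        show "\<And>s. s \<in> {0..\<tau>} \<Longrightarrow> 0 \<le> g s" unfolding g_def using Cpos by simp
        fix s assume s: "s \<in> {0<..<\<tau>}" and sN: "s \<notin> N"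
        define w where "w = - (\<Sum>j<k. m j *\<^sub>R gW (x i s - x j s)) - gV (x i s)"
        have dv: "(x i has_vector_derivative tangent_proj \<Omega> (x i s) w) (at s within {0..})"
          using sN Nsub s unfolding w_def by auto
        define H where "H = h s"
        have xb: "\<And>j. j < k \<Longrightarrow> norm (x j s) < H" using below s unfolding H_def by auto
        have "norm (\<Sum>j<k. m j *\<^sub>R gW (x i s - x j s)) \<le> (\<Sum>j<k. m j * (K * (1 + 2 * H)))"
        proof (rule order_trans[OF norm_sum], rule sum_mono)
          fix j assume "j \<in> {..<k}"
          then have jk: "j < k" by simp
          have "norm (gW (x i s - x j s)) \<le> K * (1 + norm (x i s - x j s))" by (rule gWb)
          also have "\<dots> \<le> K * (1 + 2 * H)"
          proof -
            have "norm (x i s - x j s) \<le> norm (x i s) + norm (x j s)" by (rule norm_triangle_ineq4)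
            then have "norm (x i s - x j s) \<le> 2 * H" using xb[OF ik] xb[OF jk] by simp
            then show ?thesis using K1 by simp
          qed
          finally show "norm (m j *\<^sub>R gW (x i s - x j s)) \<le> m j * (K * (1 + 2 * H))"
            using m0[OF jk] by (simp add: mult_left_mono)
        qed
        also have "\<dots> = K * (1 + 2 * H)" using msum by (simp add: sum_distrib_right[symmetric])
        finally have n1: "norm (\<Sum>j<k. m j *\<^sub>R gW (x i s - x j s)) \<le> K * (1 + 2 * H)" .
        have n2: "norm (gV (x i s)) \<le> K * (1 + H)"
        proof -
          have "K * (1 + norm (x i s)) \<le> K * (1 + H)"
            using xb[OF ik] K1 by (intro mult_left_mono) auto
          then show ?thesis using gVb[of "x i s"] by linarith
        qed
        have "norm w \<le> norm (\<Sum>j<k. m j *\<^sub>R gW (x i s - x j s)) + norm (gV (x i s))"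
          unfolding w_def using norm_triangle_ineq4[of "- (\<Sum>j<k. m j *\<^sub>R gW (x i s - x j s))" "gV (x i s)"] by simp
        also have "\<dots> \<le> K * (1 + 2 * H) + K * (1 + H)" using n1 n2 by simp
        also have "\<dots> \<le> 3 * K * (1 + H)" using K1 by (simp add: algebra_simps)
        finally have nw: "norm w \<le> 3 * K * (1 + H)" .
        have "norm (tangent_proj \<Omega> (x i s) w) \<le> 2 * norm w"
          by (rule proj_bound, rule inO[OF ik]) (use s in auto)
        also have "\<dots> \<le> 6 * K * (1 + H)" using nw by simp
        also have "\<dots> = g s" unfolding g_def H_def h_def C_def by simp
        finally have nb: "norm (tangent_proj \<Omega> (x i s) w) \<le> g s" .
        have "(x i has_vector_derivative tangent_proj \<Omega> (x i s) w) (at s within {0..\<tau>})"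
          using dv by (rule has_vector_derivative_within_subset) auto
        then show "\<exists>f'. (x i has_vector_derivative f') (at s within {0..\<tau>}) \<and> norm f' \<le> g s"
          using nb by blast
      qed
      also have "integral {0..\<tau>} g = (real n + 1) * exp (C * \<tau>) - (real n + 1)"
      proof -
        have "(g has_integral (\<lambda>s. (real n + 1) * exp (C * s)) \<tau> - (\<lambda>s. (real n + 1) * exp (C * s)) 0) {0..\<tau>}"
        proof (rule fundamental_theorem_of_calculus[OF \<tau>0])
          fix s assume "s \<in> {0..\<tau>}"
          have "((\<lambda>s. (real n + 1) * exp (C * s)) has_real_derivative g s) (at s within {0..\<tau>})"
            unfolding g_def by (auto intro!: derivative_eq_intros)
          then show "((\<lambda>s. (real n + 1) * exp (C * s)) has_vector_derivative g s) (at s within {0..\<tau>})"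
            by (simp add: has_real_derivative_iff_has_vector_derivative)
        qed
        then show ?thesis by (simp add: integral_unique)
      qed
      finally have inc: "norm (x i \<tau> - x i 0) \<le> (real n + 1) * exp (C * \<tau>) - (real n + 1)" .
      have "norm (x i \<tau>) \<le> norm (x i 0) + norm (x i \<tau> - x i 0)"
        by (metis add.commute diff_add_cancel norm_triangle_ineq)
      also have "\<dots> < real n + ((real n + 1) * exp (C * \<tau>) - (real n + 1))"
        using inc x0b[OF ik] init[OF ik] by simp
      also have "\<dots> = h \<tau>" unfolding h_def by simp
      finally show False using hi by simp
    qed
    show "\<forall>t\<ge>0. \<exists>r. r \<le> (real n + 1) * exp (C * t) \<and>
             {x i t | i. i < k \<and> m i > 0} \<subseteq> \<Omega> \<inter> ball 0 r"
    proof (intro allI impI exI[of _ "(real n + 1) * exp (C * _)"] conjI)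
      fix t :: real assume t: "t \<ge> 0"
      show "(real n + 1) * exp (C * t) \<le> (real n + 1) * exp (C * t)" by simp
      show "{x i t | i. i < k \<and> m i > 0} \<subseteq> \<Omega> \<inter> ball 0 ((real n + 1) * exp (C * t))"
      proof
        fix y assume "y \<in> {x i t | i. i < k \<and> m i > 0}"
        then obtain i where i: "i < k" "y = x i t" by auto
        have "norm y < h t" using claim[OF t i(1)] i by simp
        then have "norm y < (real n + 1) * exp (C * t)" unfolding h_def by simp
        then show "y \<in> \<Omega> \<inter> ball 0 ((real n + 1) * exp (C * t))" using inO[OF i(1) t] i by simp
      qed
    qed
  qed
qed

end
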